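(* Let $p\in[1,\infty]$, and suppose either $B^p(\mathcal Z)\subseteq\underline{\mathcal Z}\subseteq\ell^p(\mathcal Z)$ or $c_0(\mathcal Z)\cap B^p(\mathcal Z)\subseteq\underline{\mathcal Z}\subseteq c_0(\mathcal Z)\cap\ell^p(\mathcal Z)$. Let $H:\underline{\mathcal Z}\to\mathcal Y$ be a linear functional with a formal convolution representation $\underline\kappa$. (i) $H$ is $p$-continuous. (ii) If $p\neq1$ and $\|\underline\kappa\|_q<\infty$, where $q\in[1,\infty)$ is the Hölder conjugate of $p$, then $H$ has the $p$-weighted FMP.
   Context: Let $(\mathcal Z,\|\cdot\|)$ and $(\mathcal Y,\|\cdot\|_{\mathcal Y})$ be normed vector spaces over $\mathbb R$ and $\mathcal B=\{z\in\mathcal Z:\|z\|\le1\}$. Let $\mathbb Z_-=\{0,-1,-2,\dots\}$; elements of $\mathcal Z^{\mathbb Z_-}$ are sequences $\underline z=(z_t)_{t\le0}$. For $t\in\mathbb Z_-$, $\delta^t:\mathcal Z\to\mathcal Z^{\mathbb Z_-}$ maps $z$ to the sequence whose entry at time $t$ is $z$ and all other entries are $0$. Standing assumption: $\underline{\mathcal Z}\subseteq\mathcal Z^{\mathbb Z_-}$ is a set such that (a) $\underline{\mathcal Z}$ is convex and $\underline{\mathcal Z}=\{-\underline z:\underline z\in\underline{\mathcal Z}\}$; (b) $\delta^t(\mathcal B)\subseteq\underline{\mathcal Z}$ for all $t\in\mathbb Z_-$; (c) for every $\underline z\in\underline{\mathcal Z}$ and every $J\subseteq\mathbb Z_-$,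 the sequence $\sum_{t\in J}\delta^t(z_t)$ (equal to $z_t$ at times $t\in J$ and $0$ elsewhere) belongs to $\underline{\mathcal Z}$. A functional $H:\underline{\mathcal Z}\to\mathcal Y$ is linear if it is the restriction of a linear map defined on the linear span of $\underline{\mathcal Z}$. $L(\mathcal Z,\mathcal Y)$ is the space of continuous linear maps $\mathcal Z\to\mathcal Y$ with operator norm $\|\cdot\|_{op}$; for $\underline\kappa\in L(\mathcal Z,\mathcal Y)^{\mathbb Z_-}$ and $q\in[1,\infty)$, $\|\underline\kappa\|_q=(\sum_{t\le0}\|\kappa_t\|_{op}^q)^{1/q}$. $H$ has a formal convolution representation $\underline\kappa\in L(\mathcal Z,\mathcal Y)^{\mathbb Z_-}$ if $H(\underline z)=\lim_{T\to-\infty}\sum_{t=T}^0\kappa_t(z_t)$ for all $\underline z\in\underline{\mathcal Z}$. For $p\in[1,\infty]$, $\ell^p(\mathcal Z)$ is the set of $\underline z$ with $\|\underline z\|_p=(\sum_{t\le0}\|z_t\|^p)^{1/p}<\infty$ (for $p=\infty$: $\sup_{t\le0}\|z_t\|<\infty$); $B^p(\mathcal Z)$ is its closed unit ball; $c_0(\mathcal Z)$ is the set of sequences with $\|z_t\|\to0$ as $t\to-\infty$. A weighting sequence is a monotone $\underline w\in(0,1]^{\mathbb Z_-}$ with $w_t\to0$ as $t\to-\infty$; $\|\underline z\|_{p,\underline w}=(\sum_{t\le0}w_t\|z_t\|^p)^{1/p}$ for $p<\infty$ and $\sup_{t\le0}w_t\|z_t\|$ for $p=\infty$. $H$ is $p$-continuous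 if $\underline{\mathcal Z}\subseteq\ell^p(\mathcal Z)$ and $H$ is continuous for the topology induced by $\|\cdot\|_p$. $H$ has the $p$-weighted FMP if $\underline{\mathcal Z}\subseteq\ell^p(\mathcal Z)$ and there is a weighting sequence $\underline w$ such that $H$ is continuous for the topology induced by $\|\cdot\|_{p,\underline w}$. *)

theory Defs
  imports "HOL-Analysis.Analysis"
begin

text \<open>Convention: a sequence indexed by the nonpositive integers t = 0,-1,-2,... is
  represented as a function nat => 'z, index n standing for time t = -n.\<close>

definition seq_span :: "(nat \<Rightarrow> 'z::real_vector) set \<Rightarrow> (nat \<Rightarrow> 'z) set" where
  "seq_span S = {x. \<exists>F c. finite F \<and> F \<subseteq> S \<and> x = (\<lambda>n. \<Sum>v\<in>F. c v *\<^sub>R v n)}"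

definition linear_functional ::
  "(nat \<Rightarrow> 'z::real_vector) set \<Rightarrow> ((nat \<Rightarrow> 'z) \<Rightarrow> 'y::real_vector) \<Rightarrow> bool" where
  "linear_functional S H \<longleftrightarrow> (\<exists>L.
     (\<forall>x\<in>seq_span S. \<forall>y\<in>seq_span S. L (\<lambda>n. x n + y n) = L x + L y) \<and>
     (\<forall>c. \<forall>x\<in>seq_span S. L (\<lambda>n. c *\<^sub>R x n) = c *\<^sub>R L x) \<and>
     (\<forall>z\<in>S. H z = L z))"

definition formal_conv_rep ::
  "(nat \<Rightarrow> 'z::real_normed_vector) set \<Rightarrow> ((nat \<Rightarrow> 'z) \<Rightarrow> 'y::real_normed_vector)
     \<Rightarrow> (nat \<Rightarrow> ('z \<Rightarrow>\<^sub>L 'y)) \<Rightarrow> bool" where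
  "formal_conv_rep S H \<kappa> \<longleftrightarrow>
     (\<forall>z\<in>S. (\<lambda>N. \<Sum>n\<le>N. blinfun_apply (\<kappa> n) (z n)) \<longlonglongrightarrow> H z)"

definition in_lp :: "ereal \<Rightarrow> (nat \<Rightarrow> 'z::real_normed_vector) \<Rightarrow> bool" where
  "in_lp p z \<longleftrightarrow> (if p = \<infinity> then bdd_above (range (\<lambda>n. norm (z n)))
                   else summable (\<lambda>n. norm (z n) powr real_of_ereal p))"

definition lp_norm :: "ereal \<Rightarrow> (nat \<Rightarrow> 'z::real_normed_vector) \<Rightarrow> real" where
  "lp_norm p z = (if p = \<infinity> then (SUP n. norm (z n))
                  else (\<Sum>n. norm (z n) powr real_of_ereal p) powr (1 / real_of_ereal p))"

definition lp_ball :: "ereal \<Rightarrow> (nat \<Rightarrow> 'z::real_normed_vector) set" where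
  "lp_ball p = {z. in_lp p z \<and> lp_norm p z \<le> 1}"

definition c0_seq :: "(nat \<Rightarrow> 'z::real_normed_vector) set" where
  "c0_seq = {z. (\<lambda>n. norm (z n)) \<longlonglongrightarrow> 0}"

definition weighting_seq :: "(nat \<Rightarrow> real) \<Rightarrow> bool" where
  "weighting_seq w \<longleftrightarrow> (\<forall>n. 0 < w n \<and> w n \<le> 1) \<and> decseq w \<and> w \<longlonglongrightarrow> 0"

definition weighted_norm :: "ereal \<Rightarrow> (nat \<Rightarrow> real) \<Rightarrow> (nat \<Rightarrow> 'z::real_normed_vector) \<Rightarrow> real" where
  "weighted_norm p w z = (if p = \<infinity> then (SUP n. w n * norm (z n))
                  else (\<Sum>n. w n * norm (z n) powr real_of_ereal p) powr (1 / real_of_ereal p))"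

definition continuous_wrt ::
  "((nat \<Rightarrow> 'z::real_normed_vector) \<Rightarrow> real) \<Rightarrow> (nat \<Rightarrow> 'z) set \<Rightarrow> ((nat \<Rightarrow> 'z) \<Rightarrow> 'y::real_normed_vector) \<Rightarrow> bool" where
  "continuous_wrt N S H \<longleftrightarrow>
     (\<forall>x\<in>S. \<forall>e>0. \<exists>d>0. \<forall>y\<in>S. N (\<lambda>n. y n - x n) < d \<longrightarrow> dist (H y) (H x) < e)"

definition p_continuous :: "ereal \<Rightarrow> (nat \<Rightarrow> 'z::real_normed_vector) set \<Rightarrow> ((nat \<Rightarrow> 'z) \<Rightarrow> 'y::real_normed_vector) \<Rightarrow> bool" where
  "p_continuous p S H \<longleftrightarrow> S \<subseteq> {z. in_lp p z} \<and> continuous_wrt (lp_norm p) S H"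

definition p_weighted_FMP :: "ereal \<Rightarrow> (nat \<Rightarrow> 'z::real_normed_vector) set \<Rightarrow> ((nat \<Rightarrow> 'z) \<Rightarrow> 'y::real_normed_vector) \<Rightarrow> bool" where
  "p_weighted_FMP p S H \<longleftrightarrow> S \<subseteq> {z. in_lp p z} \<and>
     (\<exists>w. weighting_seq w \<and> continuous_wrt (weighted_norm p w) S H)"

definition holder_conj :: "ereal \<Rightarrow> real" where
  "holder_conj p = (if p = \<infinity> then 1 else real_of_ereal p / (real_of_ereal p - 1))"

definition seq_convex :: "(nat \<Rightarrow> 'z::real_vector) set \<Rightarrow> bool" where
  "seq_convex S \<longleftrightarrow> (\<forall>x\<in>S. \<forall>y\<in>S. \<forall>u::real. 0 \<le> u \<and> u \<le> 1 \<longrightarrow>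
      (\<lambda>n. u *\<^sub>R x n + (1 - u) *\<^sub>R y n) \<in> S)"

definition admissible_inputs :: "(nat \<Rightarrow> 'z::real_normed_vector) set \<Rightarrow> bool" where
  "admissible_inputs S \<longleftrightarrow>
     seq_convex S \<and> S = (\<lambda>z. \<lambda>n. - z n) ` S \<and>
     (\<forall>t. \<forall>z. norm z \<le> 1 \<longrightarrow> (\<lambda>n. if n = t then z else 0) \<in> S) \<and>
     (\<forall>z\<in>S. \<forall>J. (\<lambda>n. if n \<in> J then z n else 0) \<in> S)"

end

theory Submission
  imports Defs "HOL-Analysis.Analysis"
begin

lemma p_cases:
  assumes "1 \<le> (p::ereal)"
  obtains "p = \<infinity>" | P where "p = ereal P" "1 \<le> P" "real_of_ereal p = P"
  using assms by (cases p) auto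

lemma lp_norm_ge:
  assumes p: "1 \<le> p" and z: "in_lp p z"
  shows "norm (z n) \<le> lp_norm p z"
  using p
proof (cases rule: p_cases)
  case 1
  then show ?thesis using z by (auto simp: in_lp_def lp_norm_def intro!: cSUP_upper)
next
  case (2 P)
  have sm: "summable (\<lambda>n. norm (z n) powr P)" using z 2 by (auto simp: in_lp_def)
  have "norm (z n) powr P \<le> (\<Sum>n. norm (z n) powr P)"
    using sum_le_suminf[OF sm, of "{n}"] by auto
  hence "(norm (z n) powr P) powr (1/P) \<le> (\<Sum>n. norm (z n) powr P) powr (1/P)"
    using 2 by (intro powr_mono2) auto
  moreover have "(norm (z n) powr P) powr (1/P) = norm (z n)"
    using 2 by (simp add: powr_powr)
  ultimately show ?thesis using 2 by (simp add: lp_norm_def)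
qed

lemma lp_norm_nonneg:
  assumes p: "1 \<le> p" and z: "in_lp p z"
  shows "0 \<le> lp_norm p z"
  using lp_norm_ge[OF assms, of 0] norm_ge_zero order_trans by blast

lemma lp_scale:
  assumes p: "1 \<le> p" and z: "in_lp p z"
  shows "in_lp p (\<lambda>n. c *\<^sub>R z n) \<and> lp_norm p (\<lambda>n. c *\<^sub>R z n) \<le> \<bar>c\<bar> * lp_norm p z"
  using p
proof (cases rule: p_cases)
  case 1
  have b: "norm (c *\<^sub>R z n) \<le> \<bar>c\<bar> * lp_norm p z" for n
    using lp_norm_ge[OF p z, of n] by (simp add: mult_left_mono)
  show ?thesis using 1 b
    by (auto simp: in_lp_def lp_norm_def bdd_above_def intro!: cSUP_least)
next
  case (2 P)
  have sm: "summable (\<lambda>n. norm (z n) powr P)" using z 2 by (auto simp: in_lp_def)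
  have eq: "norm (c *\<^sub>R z n) powr P = \<bar>c\<bar> powr P * norm (z n) powr P" for n
    by (simp add: powr_mult)
  have sm2: "summable (\<lambda>n. norm (c *\<^sub>R z n) powr P)"
    unfolding eq by (intro summable_mult sm)
  have "(\<Sum>n. norm (c *\<^sub>R z n) powr P) = \<bar>c\<bar> powr P * (\<Sum>n. norm (z n) powr P)"
    unfolding eq by (rule suminf_mult[OF sm])
  hence "(\<Sum>n. norm (c *\<^sub>R z n) powr P) powr (1/P) = \<bar>c\<bar> * (\<Sum>n. norm (z n) powr P) powr (1/P)"
    using 2 by (simp add: powr_mult powr_powr)
  then show ?thesis using 2 sm2 by (simp add: in_lp_def lp_norm_def)
qed

lemma lp_diff:
  assumes p: "1 \<le> p" and x: "in_lp p x" and y: "in_lp p y"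
  shows "in_lp p (\<lambda>n. y n - x n)"
  using p
proof (cases rule: p_cases)
  case 1
  have "norm (y n - x n) \<le> lp_norm p y + lp_norm p x" for n
    using lp_norm_ge[OF p x, of n] lp_norm_ge[OF p y, of n] norm_triangle_ineq4[of "y n" "x n"]
    by linarith
  then show ?thesis using 1 by (auto simp: in_lp_def bdd_above_def)
next
  case (2 P)
  have smx: "summable (\<lambda>n. norm (x n) powr P)" using x 2 by (auto simp: in_lp_def)
  have smy: "summable (\<lambda>n. norm (y n) powr P)" using y 2 by (auto simp: in_lp_def)
  have b: "norm (norm (y n - x n) powr P) \<le> 2 powr P * (norm (y n) powr P + norm (x n) powr P)" for n
  proof -
    let ?m = "max (norm (y n)) (norm (x n))"
    have "norm (y n - x n) \<le> 2 * ?m"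
      using norm_triangle_ineq4[of "y n" "x n"] by linarith
    hence "norm (y n - x n) powr P \<le> (2 * ?m) powr P"
      using 2 by (intro powr_mono2) auto
    also have "\<dots> = 2 powr P * ?m powr P" by (simp add: powr_mult)
    also have "?m powr P \<le> norm (y n) powr P + norm (x n) powr P"
      by (cases "norm (y n) \<le> norm (x n)") (auto simp: max_def)
    finally show ?thesis by simp
  qed
  have "summable (\<lambda>n. 2 powr P * (norm (y n) powr P + norm (x n) powr P))"
    by (intro summable_mult summable_add smx smy)
  hence "summable (\<lambda>n. norm (y n - x n) powr P)"
    by (rule summable_comparison_test[rotated]) (use b in auto)
  then show ?thesis using 2 by (simp add: in_lp_def)
qed

lemma sum_split_atMost:
  fixes f :: "nat \<Rightarrow> 'a::ab_group_add"
  assumes "M \<le> N"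
  shows "(\<Sum>n\<le>N. f n) - (\<Sum>n\<le>M. f n) = (\<Sum>n\<in>{M<..N}. f n)"
proof -
  have "{..N} = {..M} \<union> {M<..N}" using assms by auto
  moreover have "{..M} \<inter> {M<..N} = {}" by auto
  ultimately have "(\<Sum>n\<le>N. f n) = (\<Sum>n\<le>M. f n) + (\<Sum>n\<in>{M<..N}. f n)"
    by (simp add: sum.union_disjoint)
  then show ?thesis by simp
qed

primrec blocks :: "(nat \<Rightarrow> nat \<Rightarrow> nat) \<Rightarrow> nat \<Rightarrow> nat" where
  "blocks F 0 = 0"
| "blocks F (Suc k) = F k (blocks F k)"

lemma geom_half_sum: "(\<Sum>k<K. 1 / 2 ^ Suc k :: real) = 1 - 1 / 2 ^ K"
  by (induction K) (auto simp: field_simps)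

lemma bounded_on_ball:
  fixes S :: "(nat \<Rightarrow> 'z::real_normed_vector) set"
    and H :: "(nat \<Rightarrow> 'z) \<Rightarrow> 'y::real_normed_vector"
    and \<kappa> :: "nat \<Rightarrow> ('z \<Rightarrow>\<^sub>L 'y)"
  assumes p: "1 \<le> p" and ballS: "c0_seq \<inter> lp_ball p \<subseteq> S" and rep: "formal_conv_rep S H \<kappa>"
  shows "\<exists>C. \<forall>z\<in>S \<inter> lp_ball p. norm (H z) \<le> C"
proof (rule ccontr)
  assume nb: "\<not> ?thesis"
  define PS where "PS z = (\<lambda>N. \<Sum>n\<le>N. blinfun_apply (\<kappa> n) (z n))" for z :: "nat \<Rightarrow> 'z"
  have ball_le1: "norm (z n) \<le> 1" if "z \<in> lp_ball p" for z n
    using that lp_norm_ge[OF p, of z n] by (auto simp: lp_ball_def)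
  have step: "\<exists>z N. z \<in> lp_ball p \<and> M < N \<and> B < norm (\<Sum>n\<in>{M<..N}. blinfun_apply (\<kappa> n) (z n))"
    for M and B :: real
  proof -
    define CM where "CM = (\<Sum>n\<le>M. norm (\<kappa> n))"
    obtain z where z: "z \<in> S" "z \<in> lp_ball p" "B + CM + 1 < norm (H z)"
      using nb by (meson IntE not_le)
    have "norm (PS z M) \<le> (\<Sum>n\<le>M. norm (blinfun_apply (\<kappa> n) (z n)))"
      unfolding PS_def by (rule norm_sum)
    also have "\<dots> \<le> CM" unfolding CM_def
    proof (rule sum_mono)
      fix n
      have "norm (blinfun_apply (\<kappa> n) (z n)) \<le> norm (\<kappa> n) * norm (z n)" by (rule norm_blinfun)
      also have "\<dots> \<le> norm (\<kappa> n) * 1" using ball_le1[OF z(2)] by (intro mult_left_mono) auto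
      finally show "norm (blinfun_apply (\<kappa> n) (z n)) \<le> norm (\<kappa> n)" by simp
    qed
    finally have PSM: "norm (PS z M) \<le> CM" .
    have "PS z \<longlonglongrightarrow> H z" using rep z(1) by (auto simp: formal_conv_rep_def PS_def)
    hence "(\<lambda>N. norm (PS z N - PS z M)) \<longlonglongrightarrow> norm (H z - PS z M)"
      by (intro tendsto_norm tendsto_diff tendsto_const)
    moreover have "B < norm (H z - PS z M)"
      using z(3) PSM norm_triangle_ineq2[of "H z" "PS z M"] by linarith
    ultimately have "eventually (\<lambda>N. B < norm (PS z N - PS z M)) sequentially"
      by (rule order_tendstoD(1))
    then obtain N0 where N0: "\<And>N. N \<ge> N0 \<Longrightarrow> B < norm (PS z N - PS z M)"
      by (auto simp: eventually_sequentially)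
    define N where "N = N0 + Suc M"
    have "B < norm (PS z N - PS z M)" using N0 by (simp add: N_def)
    moreover have "PS z N - PS z M = (\<Sum>n\<in>{M<..N}. blinfun_apply (\<kappa> n) (z n))"
      unfolding PS_def by (rule sum_split_atMost) (simp add: N_def)
    moreover have "M < N" by (simp add: N_def)
    ultimately show ?thesis using z(2) by metis
  qed
  then obtain zf Nf where zf: "\<And>M B. zf M B \<in> lp_ball p \<and> M < Nf M B \<and>
      B < norm (\<Sum>n\<in>{M<..Nf M B}. blinfun_apply (\<kappa> n) (zf M B n))"
    by metis
  define c :: "nat \<Rightarrow> real" where "c k = 1 / 2 ^ Suc k" for k
  define Ns where "Ns = blocks (\<lambda>k m. Nf m (2 ^ Suc k))"
  define zk where "zk k = zf (Ns k) (2 ^ Suc k)" for k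
  have Ns0: "Ns 0 = 0" and NsSuc: "Ns (Suc k) = Nf (Ns k) (2 ^ Suc k)" for k
    by (simp_all add: Ns_def)
  have sm: "strict_mono Ns"
    unfolding strict_mono_Suc_iff using zf by (simp add: NsSuc)
  have zk_ball: "zk k \<in> lp_ball p" for k using zf by (simp add: zk_def)
  have zk_big: "2 ^ Suc k < norm (\<Sum>n\<in>{Ns k<..Ns (Suc k)}. blinfun_apply (\<kappa> n) (zk k n))" for k
    using zf[of "Ns k" "2 ^ Suc k"] by (simp add: zk_def NsSuc)
  have zk_le1: "norm (zk k n) \<le> 1" for k n using ball_le1[OF zk_ball] .
  have c_pos: "0 < c k" and c_le1: "c k \<le> 1" for k
    using one_le_power[of "2::real" "Suc k"] by (auto simp: c_def simp del: power_Suc)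
  have c_anti: "j \<le> k \<Longrightarrow> c k \<le> c j" for j k
    by (auto simp: c_def intro!: divide_left_mono power_increasing)
  define blk where "blk n = (LEAST k. n \<le> Ns (Suc k))" for n
  have blk: "Ns (blk n) < n \<and> n \<le> Ns (Suc (blk n))" if "0 < n" for n
  proof
    have ex: "n \<le> Ns (Suc n)" using seq_suble[OF sm, of "Suc n"] by simp
    show "n \<le> Ns (Suc (blk n))" unfolding blk_def by (rule LeastI[of _ n]) (rule ex)
    show "Ns (blk n) < n"
    proof (cases "blk n")
      case 0 then show ?thesis using that Ns0 by simp
    next
      case (Suc j)
      hence "j < blk n" by simp
      hence "\<not> n \<le> Ns (Suc j)" unfolding blk_def by (rule not_less_Least)
      then show ?thesis using Suc by simp
    qed
  qed
  have blk_ge: "K \<le> blk n" if "Ns K < n" for K n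
  proof (rule ccontr)
    assume "\<not> K \<le> blk n"
    hence "Suc (blk n) \<le> K" by simp
    hence "Ns (Suc (blk n)) \<le> Ns K" by (rule strict_mono_leD[OF sm])
    moreover have "n \<le> Ns (Suc (blk n))" using blk[of n] that by simp
    ultimately show False using that by simp
  qed
  have blk_eq: "blk n = k" if "Ns k < n" "n \<le> Ns (Suc k)" for k n
  proof -
    have "k \<le> blk n" using blk_ge that by simp
    moreover have "\<not> Suc k \<le> blk n"
    proof
      assume "Suc k \<le> blk n"
      hence "Ns (Suc k) \<le> Ns (blk n)" by (rule strict_mono_leD[OF sm])
      moreover have "Ns (blk n) < n" using blk[of n] that by simp
      ultimately show False using that by simp
    qed
    ultimately show ?thesis by simp
  qed
  define Z where "Z n = (if n = 0 then 0 else c (blk n) *\<^sub>R zk (blk n) n)" for n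
  have Znorm: "norm (Z n) \<le> c (blk n)" for n
  proof (cases "n = 0")
    case True then show ?thesis using c_pos[of "blk n"] by (simp add: Z_def)
  next
    case False
    have "norm (Z n) = c (blk n) * norm (zk (blk n) n)"
      using False c_pos[of "blk n"] by (simp add: Z_def)
    also have "\<dots> \<le> c (blk n) * 1" using zk_le1 c_pos by (intro mult_left_mono) (auto intro: less_imp_le)
    finally show ?thesis by simp
  qed
  have Z_c0: "Z \<in> c0_seq"
    unfolding c0_seq_def
  proof (intro CollectI LIMSEQ_I)
    fix r :: real assume r: "0 < r"
    obtain K where K: "(1/2::real) ^ K < r" using real_arch_pow_inv[OF r, of "1/2"] by auto
    have "c K = (1/2::real)^K / 2" by (simp add: c_def power_divide)
    moreover have "0 < (1/2::real)^K" by simp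
    ultimately have cK: "c K < r" using K by linarith
    show "\<exists>no. \<forall>n\<ge>no. norm (norm (Z n) - 0) < r"
    proof (intro exI allI impI)
      fix n assume "Suc (Ns K) \<le> n"
      hence "K \<le> blk n" by (intro blk_ge) simp
      hence "c (blk n) \<le> c K" by (rule c_anti)
      then show "norm (norm (Z n) - 0) < r" using Znorm[of n] cK by simp
    qed
  qed
  have Z_ball: "Z \<in> lp_ball p"
    using p
  proof (cases rule: p_cases)
    case 1
    have "norm (Z n) \<le> 1" for n using Znorm[of n] c_le1[of "blk n"] by simp
    then show ?thesis using 1
      by (auto simp: lp_ball_def in_lp_def lp_norm_def bdd_above_def intro!: cSUP_least)
  next
    case (2 P)
    define f where "f n = norm (Z n) powr P" for n
    have f_nn: "0 \<le> f n" for n by (simp add: f_def)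
    have zk_sum: "summable (\<lambda>n. norm (zk k n) powr P) \<and> (\<Sum>n. norm (zk k n) powr P) \<le> 1" for k
    proof -
      have sm': "summable (\<lambda>n. norm (zk k n) powr P)"
        using zk_ball[of k] 2 by (auto simp: lp_ball_def in_lp_def)
      define X where "X = (\<Sum>n. norm (zk k n) powr P)"
      have X0: "0 \<le> X" unfolding X_def by (intro suminf_nonneg sm') auto
      have "X powr (1/P) \<le> 1" using zk_ball[of k] 2 by (auto simp: lp_ball_def lp_norm_def X_def)
      hence "(X powr (1/P)) powr P \<le> 1" using 2 by (intro powr_le1) auto
      hence "X \<le> 1" using 2 X0 by (simp add: powr_powr)
      then show ?thesis using sm' by (simp add: X_def)
    qed
    have blockle: "(\<Sum>n\<in>{Ns k<..Ns (Suc k)}. f n) \<le> c k" for k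
    proof -
      have "(\<Sum>n\<in>{Ns k<..Ns (Suc k)}. f n) \<le> (\<Sum>n\<in>{Ns k<..Ns (Suc k)}. c k * norm (zk k n) powr P)"
      proof (rule sum_mono)
        fix n assume n: "n \<in> {Ns k<..Ns (Suc k)}"
        hence "blk n = k" "n \<noteq> 0" using blk_eq by auto
        hence "f n = (c k * norm (zk k n)) powr P"
          using c_pos[of k] by (simp add: f_def Z_def)
        also have "\<dots> = c k powr P * norm (zk k n) powr P" by (simp add: powr_mult)
        also have "\<dots> \<le> c k * norm (zk k n) powr P"
          using powr_le_one_le[OF c_pos[of k] c_le1[of k] 2(2)] by (intro mult_right_mono) auto
        finally show "f n \<le> c k * norm (zk k n) powr P" .
      qed
      also have "\<dots> = c k * (\<Sum>n\<in>{Ns k<..Ns (Suc k)}. norm (zk k n) powr P)"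
        by (simp add: sum_distrib_left)
      also have "\<dots> \<le> c k * 1"
      proof (intro mult_left_mono)
        have "(\<Sum>n\<in>{Ns k<..Ns (Suc k)}. norm (zk k n) powr P) \<le> (\<Sum>n. norm (zk k n) powr P)"
          using zk_sum[of k] by (intro sum_le_suminf) auto
        then show "(\<Sum>n\<in>{Ns k<..Ns (Suc k)}. norm (zk k n) powr P) \<le> 1" using zk_sum[of k] by linarith
      qed (use c_pos in \<open>auto intro: less_imp_le\<close>)
      finally show ?thesis by simp
    qed
    have blocksum: "(\<Sum>n\<le>Ns K. f n) = (\<Sum>k<K. \<Sum>n\<in>{Ns k<..Ns (Suc k)}. f n)" for K
    proof (induction K)
      case 0 then show ?case using 2 by (simp add: Ns0 f_def Z_def)
    next
      case (Suc K)
      have "Ns K \<le> Ns (Suc K)" using strict_mono_leD[OF sm, of K "Suc K"] by simp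
      hence "(\<Sum>n\<le>Ns (Suc K). f n) = (\<Sum>n\<le>Ns K. f n) + (\<Sum>n\<in>{Ns K<..Ns (Suc K)}. f n)"
        using sum_split_atMost[of "Ns K" "Ns (Suc K)" f] by simp
      then show ?case using Suc by simp
    qed
    have partial: "(\<Sum>n\<le>N. f n) \<le> 1" for N
    proof -
      have "(\<Sum>n\<le>N. f n) \<le> (\<Sum>n\<le>Ns N. f n)"
        using seq_suble[OF sm, of N] f_nn by (intro sum_mono2) auto
      also have "\<dots> \<le> (\<Sum>k<N. c k)" unfolding blocksum by (intro sum_mono blockle)
      also have "\<dots> \<le> 1" unfolding c_def geom_half_sum by simp
      finally show ?thesis .
    qed
    have smf: "summable f" by (rule bounded_imp_summable[OF f_nn partial])
    have "suminf f \<le> 1"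
    proof (rule suminf_le_const[OF smf])
      fix n
      have "sum f {..<n} \<le> sum f {..n}" using f_nn by (intro sum_mono2) auto
      then show "sum f {..<n} \<le> 1" using partial[of n] by simp
    qed
    hence "suminf f powr (1/P) \<le> 1" using 2 suminf_nonneg[OF smf f_nn] by (intro powr_le1) auto
    then show ?thesis using 2 smf by (simp add: lp_ball_def in_lp_def lp_norm_def f_def[abs_def])
  qed
  have ZS: "Z \<in> S" using ballS Z_c0 Z_ball by auto
  have "PS Z \<longlonglongrightarrow> H Z" using rep ZS by (auto simp: formal_conv_rep_def PS_def)
  hence l1: "(\<lambda>k. PS Z (Ns k)) \<longlonglongrightarrow> H Z"
    using LIMSEQ_subseq_LIMSEQ[OF _ sm] by (simp add: o_def)
  hence l2: "(\<lambda>k. PS Z (Ns (Suc k))) \<longlonglongrightarrow> H Z" by (rule LIMSEQ_Suc)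
  have "(\<lambda>k. norm (PS Z (Ns (Suc k)) - PS Z (Ns k))) \<longlonglongrightarrow> norm (H Z - H Z)"
    by (intro tendsto_norm tendsto_diff l1 l2)
  hence "eventually (\<lambda>k. norm (PS Z (Ns (Suc k)) - PS Z (Ns k)) < 1) sequentially"
    by (intro order_tendstoD(2)) auto
  then obtain k where k: "norm (PS Z (Ns (Suc k)) - PS Z (Ns k)) < 1"
    by (auto simp: eventually_sequentially)
  have "PS Z (Ns (Suc k)) - PS Z (Ns k) = (\<Sum>n\<in>{Ns k<..Ns (Suc k)}. blinfun_apply (\<kappa> n) (Z n))"
    unfolding PS_def using strict_mono_leD[OF sm, of k "Suc k"] by (intro sum_split_atMost) simp
  also have "\<dots> = (\<Sum>n\<in>{Ns k<..Ns (Suc k)}. c k *\<^sub>R blinfun_apply (\<kappa> n) (zk k n))"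
  proof (rule sum.cong)
    fix n assume n: "n \<in> {Ns k<..Ns (Suc k)}"
    hence "blk n = k" "n \<noteq> 0" using blk_eq by auto
    then show "blinfun_apply (\<kappa> n) (Z n) = c k *\<^sub>R blinfun_apply (\<kappa> n) (zk k n)"
      by (simp add: Z_def blinfun.scaleR_right)
  qed simp
  also have "\<dots> = c k *\<^sub>R (\<Sum>n\<in>{Ns k<..Ns (Suc k)}. blinfun_apply (\<kappa> n) (zk k n))"
    by (simp add: scaleR_sum_right)
  finally have "norm (PS Z (Ns (Suc k)) - PS Z (Ns k)) = c k * norm (\<Sum>n\<in>{Ns k<..Ns (Suc k)}. blinfun_apply (\<kappa> n) (zk k n))"
    using c_pos[of k] by simp
  also have "\<dots> > c k * 2 ^ Suc k" using zk_big[of k] c_pos[of k] by (intro mult_strict_left_mono) auto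
  also have "c k * 2 ^ Suc k = 1" by (simp add: c_def)
  finally show False using k by simp
qed

lemma PS_diff:
  "(\<Sum>n\<le>N. blinfun_apply (\<kappa> n) (y n)) - (\<Sum>n\<le>N. blinfun_apply (\<kappa> n) (x n)) =
   (\<Sum>n\<le>N. blinfun_apply (\<kappa> n) (y n - x n))"
  by (simp add: sum_subtractf[symmetric] blinfun.diff_right)

lemma rep_diff:
  assumes rep: "formal_conv_rep S H \<kappa>" and x: "x \<in> S" and y: "y \<in> S"
  shows "(\<lambda>N. \<Sum>n\<le>N. blinfun_apply (\<kappa> n) (y n - x n)) \<longlonglongrightarrow> H y - H x"
proof -
  have "(\<lambda>N. (\<Sum>n\<le>N. blinfun_apply (\<kappa> n) (y n)) - (\<Sum>n\<le>N. blinfun_apply (\<kappa> n) (x n))) \<longlonglongrightarrow> H y - H x"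
    using rep x y by (intro tendsto_diff) (auto simp: formal_conv_rep_def)
  then show ?thesis by (simp add: PS_diff)
qed

lemma part_i:
  fixes S :: "(nat \<Rightarrow> 'z::real_normed_vector) set"
    and H :: "(nat \<Rightarrow> 'z) \<Rightarrow> 'y::real_normed_vector"
    and \<kappa> :: "nat \<Rightarrow> ('z \<Rightarrow>\<^sub>L 'y)"
  assumes p: "1 \<le> p" and ballS: "c0_seq \<inter> lp_ball p \<subseteq> S" and Slp: "S \<subseteq> {z. in_lp p z}"
    and alt: "lp_ball p \<subseteq> S \<or> S \<subseteq> c0_seq"
    and rep: "formal_conv_rep S H \<kappa>"
  shows "p_continuous p S H"
proof -
  obtain C0 where C0: "\<And>z. z \<in> S \<inter> lp_ball p \<Longrightarrow> norm (H z) \<le> C0"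
    using bounded_on_ball[OF p ballS rep] by blast
  define C where "C = max C0 0"
  have C: "z \<in> S \<inter> lp_ball p \<Longrightarrow> norm (H z) \<le> C" "0 \<le> C" for z
    using C0 by (auto simp: C_def intro: le_max_iff_disj[THEN iffD2])
  have "continuous_wrt (lp_norm p) S H"
    unfolding continuous_wrt_def
  proof (intro ballI allI impI)
    fix x e assume x: "x \<in> S" and e: "(0::real) < e"
    define d where "d = e / (C + 1)"
    have d: "0 < d" using e C(2) by (simp add: d_def)
    show "\<exists>d>0. \<forall>y\<in>S. lp_norm p (\<lambda>n. y n - x n) < d \<longrightarrow> dist (H y) (H x) < e"
    proof (intro exI[of _ d] conjI d ballI impI)
      fix y assume y: "y \<in> S" and yd: "lp_norm p (\<lambda>n. y n - x n) < d"
      define u where "u n = y n - x n" for n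
      have uin: "in_lp p u" unfolding u_def using lp_diff[OF p] x y Slp by auto
      define r where "r = lp_norm p u"
      have r0: "0 \<le> r" unfolding r_def by (rule lp_norm_nonneg[OF p uin])
      have rd: "r < d" using yd by (simp add: r_def u_def[abs_def])
      have lu: "(\<lambda>N. \<Sum>n\<le>N. blinfun_apply (\<kappa> n) (u n)) \<longlonglongrightarrow> H y - H x"
        unfolding u_def by (rule rep_diff[OF rep x y])
      show "dist (H y) (H x) < e"
      proof (cases "r = 0")
        case True
        have "u n = 0" for n using lp_norm_ge[OF p uin, of n] True by (simp add: r_def)
        hence "(\<lambda>N. \<Sum>n\<le>N. blinfun_apply (\<kappa> n) (u n)) \<longlonglongrightarrow> 0" by simp
        hence "H y - H x = 0" using lu LIMSEQ_unique by blast
        then show ?thesis using e by (simp add: dist_norm)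
      next
        case False
        hence rp: "0 < r" using r0 by simp
        define v where "v n = (1/r) *\<^sub>R u n" for n
        have vl: "in_lp p v" "lp_norm p v \<le> 1"
          using lp_scale[OF p uin, of "1/r"] rp by (auto simp: v_def[abs_def] r_def)
        hence vball: "v \<in> lp_ball p" by (simp add: lp_ball_def)
        have vS: "v \<in> S"
          using alt
        proof
          assume "lp_ball p \<subseteq> S" then show ?thesis using vball by auto
        next
          assume c0: "S \<subseteq> c0_seq"
          have "(\<lambda>n. (1/r) * (norm (y n) + norm (x n))) \<longlonglongrightarrow> (1/r) * (0 + 0)"
            using c0 x y by (intro tendsto_mult tendsto_add tendsto_const) (auto simp: c0_seq_def)
          hence "(\<lambda>n. 1 / r * (norm (y n) + norm (x n))) \<longlonglongrightarrow> 0" by simp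
          hence "(\<lambda>n. norm (v n)) \<longlonglongrightarrow> 0"
          proof (rule tendsto_sandwich[OF _ _ tendsto_const, rotated 2])
            show "\<forall>\<^sub>F n in sequentially. 0 \<le> norm (v n)" by simp
            show "\<forall>\<^sub>F n in sequentially. norm (v n) \<le> 1 / r * (norm (y n) + norm (x n))"
              using rp norm_triangle_ineq4
              by (auto simp: v_def u_def intro!: always_eventually divide_right_mono)
          qed
          then show ?thesis using ballS vball by (auto simp: c0_seq_def)
        qed
        have "(\<lambda>N. \<Sum>n\<le>N. blinfun_apply (\<kappa> n) (v n)) \<longlonglongrightarrow> H v"
          using rep vS by (auto simp: formal_conv_rep_def)
        moreover have "(\<lambda>N. \<Sum>n\<le>N. blinfun_apply (\<kappa> n) (v n)) \<longlonglongrightarrow> (1/r) *\<^sub>R (H y - H x)"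
        proof -
          have "(\<lambda>N. (1/r) *\<^sub>R (\<Sum>n\<le>N. blinfun_apply (\<kappa> n) (u n))) \<longlonglongrightarrow> (1/r) *\<^sub>R (H y - H x)"
            by (intro tendsto_scaleR tendsto_const lu)
          then show ?thesis
            by (simp add: v_def scaleR_sum_right blinfun.scaleR_right)
        qed
        ultimately have Hv: "H v = (1/r) *\<^sub>R (H y - H x)" by (rule LIMSEQ_unique)
        have "norm (H y - H x) = r * norm (H v)" using rp by (simp add: Hv)
        also have "\<dots> \<le> r * C" using C(1)[of v] vS vball rp by (intro mult_left_mono) auto
        also have "\<dots> \<le> d * C" using rd C(2) by (intro mult_right_mono) auto
        also have "\<dots> < e" using e C(2) by (simp add: d_def field_simps)
        finally show ?thesis by (simp add: dist_norm)
      qed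
    qed
  qed
  then show ?thesis using Slp by (simp add: p_continuous_def)
qed

lemma sqrt_telescope_bound:
  fixes s t :: real
  assumes "0 < t" "t \<le> s"
  shows "(s - t) / sqrt s \<le> 2 * (sqrt s - sqrt t)"
proof -
  define \<alpha> where "\<alpha> = sqrt s"
  define \<beta> where "\<beta> = sqrt t"
  have a: "0 < \<alpha>" "s = \<alpha> * \<alpha>" using assms by (auto simp: \<alpha>_def)
  have b: "0 < \<beta>" "t = \<beta> * \<beta>" using assms by (auto simp: \<beta>_def)
  have h: "0 \<le> (\<alpha> - \<beta>) * (\<alpha> - \<beta>)" by simp
  have "\<alpha> * \<alpha> - \<beta> * \<beta> \<le> 2 * (\<alpha> - \<beta>) * \<alpha>"
    using h by (simp add: algebra_simps)
  hence "(\<alpha> * \<alpha> - \<beta> * \<beta>) / \<alpha> \<le> 2 * (\<alpha> - \<beta>)"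
    using a(1) by (simp add: divide_le_eq)
  then show ?thesis using assms unfolding \<alpha>_def \<beta>_def by simp
qed

lemma weights_exist:
  fixes a :: "nat \<Rightarrow> real"
  assumes nn: "\<And>n. 0 \<le> a n" and sm: "summable a"
  shows "\<exists>s. (\<forall>n. 0 < s n \<and> s n \<le> 1) \<and> decseq s \<and> s \<longlonglongrightarrow> 0 \<and> summable (\<lambda>n. a n / sqrt (s n))"
proof -
  define R where "R = suminf a"
  define r where "r n = R - sum a {..<n}" for n
  have R0: "0 \<le> R" unfolding R_def using suminf_nonneg[OF sm nn] .
  have r0: "0 \<le> r n" for n unfolding r_def R_def using sum_le_suminf[OF sm, of "{..<n}"] nn by auto
  have rR: "r n \<le> R" for n unfolding r_def using sum_nonneg[of "{..<n}" a] nn by auto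
  have rSuc: "r n - r (Suc n) = a n" for n by (simp add: r_def)
  have rlim: "r \<longlonglongrightarrow> 0"
  proof -
    have "(\<lambda>n. R - sum a {..<n}) \<longlonglongrightarrow> R - R"
      unfolding R_def by (intro tendsto_diff tendsto_const summable_LIMSEQ sm)
    then show ?thesis by (simp add: r_def[abs_def])
  qed
  define s where "s n = (r n + (1/2)^n) / (R + 1)" for n
  have s_pos: "0 < s n" for n
  proof -
    have "0 < r n + (1/2::real)^n" using r0[of n] by (simp add: add_nonneg_pos)
    then show ?thesis using R0 by (simp add: s_def)
  qed
  have s_le1: "s n \<le> 1" for n
  proof -
    have "(1/2::real)^n \<le> 1" by (simp add: power_le_one)
    then show ?thesis using rR[of n] R0 by (simp add: s_def divide_le_eq)
  qed
  have half: "(1/2::real)^Suc n < (1/2)^n" for n by simp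
  have s_dec: "s (Suc n) \<le> s n" for n
  proof -
    have "r (Suc n) + (1/2)^Suc n \<le> r n + (1/2)^n"
      using rSuc[of n] nn[of n] half[of n] by linarith
    then show ?thesis unfolding s_def using R0 by (intro divide_right_mono) auto
  qed
  have decs: "decseq s" by (rule decseq_SucI) (rule s_dec)
  have slim: "s \<longlonglongrightarrow> 0"
  proof -
    have "(\<lambda>n. (r n + (1/2::real)^n) / (R + 1)) \<longlonglongrightarrow> (0 + 0) / (R + 1)"
      by (intro tendsto_divide tendsto_add rlim LIMSEQ_power_zero tendsto_const) (use R0 in auto)
    then show ?thesis by (simp add: s_def[abs_def])
  qed
  have an: "a n \<le> (R + 1) * (s n - s (Suc n))" for n
  proof -
    have hs: "(R + 1) * s m = r m + (1/2)^m" for m using R0 by (simp add: s_def)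
    have "(R + 1) * (s n - s (Suc n)) = r n - r (Suc n) + ((1/2)^n - (1/2)^Suc n)"
      by (simp only: right_diff_distrib hs)
    then show ?thesis using rSuc[of n] half[of n] by (simp del: power_Suc)
  qed
  have bound: "a n / sqrt (s n) \<le> 2 * (R + 1) * (sqrt (s n) - sqrt (s (Suc n)))" for n
  proof -
    have "a n / sqrt (s n) \<le> (R + 1) * (s n - s (Suc n)) / sqrt (s n)"
      using an[of n] s_pos[of n] by (intro divide_right_mono) auto
    also have "\<dots> = (R + 1) * ((s n - s (Suc n)) / sqrt (s n))" by simp
    also have "\<dots> \<le> (R + 1) * (2 * (sqrt (s n) - sqrt (s (Suc n))))"
      using R0 s_pos s_dec by (intro mult_left_mono sqrt_telescope_bound) auto
    finally show ?thesis by (simp add: algebra_simps)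
  qed
  have "(\<lambda>n. sqrt (s n) - sqrt (s (Suc n))) sums (sqrt (s 0) - 0)"
    using telescope_sums'[of "\<lambda>n. sqrt (s n)" 0] tendsto_real_sqrt[OF slim] by simp
  hence "summable (\<lambda>n. 2 * (R + 1) * (sqrt (s n) - sqrt (s (Suc n))))"
    by (intro summable_mult) (auto simp: sums_iff)
  hence "summable (\<lambda>n. a n / sqrt (s n))"
  proof (rule summable_comparison_test[rotated], intro exI[of _ 0] allI impI)
    fix n
    have "norm (a n / sqrt (s n)) = a n / sqrt (s n)" using nn[of n] s_pos[of n] by simp
    then show "norm (a n / sqrt (s n)) \<le> 2 * (R + 1) * (sqrt (s n) - sqrt (s (Suc n)))"
      using bound[of n] by simp
  qed
  then show ?thesis using s_pos s_le1 decs slim by blast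
qed

lemma young_split:
  fixes P q L K s t :: real
  assumes P: "1 < P" and q: "q = P / (P - 1)" and L: "0 < L" and K: "0 \<le> K" and s: "0 < s" and t: "0 \<le> t"
  shows "K * t \<le> L powr q * (K powr q * s powr (-1/2)) + L powr (-P) * (s powr ((P-1)/2) * t powr P)"
proof -
  have q1: "1 < q" using P by (simp add: q field_simps)
  have conj: "1/q + 1/P = 1" using P by (simp add: q field_simps)
  define \<alpha> where "\<alpha> = L * K * s powr (-1/(2*q))"
  define \<beta> where "\<beta> = t * L powr (-1) * s powr (1/(2*q))"
  have a0: "0 \<le> \<alpha>" using L K by (simp add: \<alpha>_def)
  have b0: "0 \<le> \<beta>" using L t by (simp add: \<beta>_def)
  have ab: "\<alpha> * \<beta> = K * t"
  proof -
    have "\<alpha> * \<beta> = K * t * (L * L powr (-1)) * (s powr (-1/(2*q)) * s powr (1/(2*q)))"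
      by (simp add: \<alpha>_def \<beta>_def algebra_simps)
    also have "L * L powr (-1) = 1" using L by (simp add: powr_neg_one)
    also have "s powr (-1/(2*q)) * s powr (1/(2*q)) = 1"
      using s by (simp add: powr_add[symmetric])
    finally show ?thesis by simp
  qed
  have apq: "\<alpha> powr q = L powr q * (K powr q * s powr (-1/2))"
  proof -
    have "\<alpha> powr q = L powr q * K powr q * (s powr (-1/(2*q))) powr q"
      by (simp add: \<alpha>_def powr_mult)
    also have "(s powr (-1/(2*q))) powr q = s powr (-1/2)"
      using q1 by (simp add: powr_powr)
    finally show ?thesis by simp
  qed
  have bpP: "\<beta> powr P = L powr (-P) * (s powr ((P-1)/2) * t powr P)"
  proof -
    have "\<beta> powr P = t powr P * (L powr (-1)) powr P * (s powr (1/(2*q))) powr P"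
      unfolding \<beta>_def by (simp only: powr_mult)
    also have "(L powr (-1)) powr P = L powr (-P)" unfolding powr_powr by simp
    also have "(s powr (1/(2*q))) powr P = s powr ((P-1)/2)"
    proof -
      have e: "1/(2*q) * P = (P-1)/2" using P by (simp add: q field_simps)
      show ?thesis by (simp only: powr_powr e)
    qed
    finally show ?thesis by simp
  qed
  have "\<alpha> * \<beta> \<le> \<alpha> powr q / q + \<beta> powr P / P"
    by (rule Youngs_inequality[OF q1 P conj a0 b0])
  also have "\<alpha> powr q / q \<le> \<alpha> powr q" using q1 by (simp add: divide_le_eq mult_le_cancel_left1)
  also have "\<beta> powr P / P \<le> \<beta> powr P" using P by (simp add: divide_le_eq mult_le_cancel_left1)
  finally show ?thesis using ab apq bpP by simp
qed

lemma lim_norm_bound: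
  fixes f :: "nat \<Rightarrow> 'a::real_normed_vector"
  assumes "f \<longlonglongrightarrow> l" "\<And>N. norm (f N) \<le> B"
  shows "norm l \<le> B"
proof -
  have "(\<lambda>N. norm (f N)) \<longlonglongrightarrow> norm l" by (intro tendsto_norm assms(1))
  then show ?thesis by (rule LIMSEQ_le_const2) (use assms(2) in auto)
qed

lemma PS_norm_bound:
  "norm (\<Sum>n\<le>N. blinfun_apply (\<kappa> n) (u n)) \<le> (\<Sum>n\<le>N. norm (\<kappa> n) * norm (u n))"
  by (rule order_trans[OF norm_sum sum_mono]) (rule norm_blinfun)

lemma part_ii:
  fixes S :: "(nat \<Rightarrow> 'z::real_normed_vector) set"
    and H :: "(nat \<Rightarrow> 'z) \<Rightarrow> 'y::real_normed_vector"
    and \<kappa> :: "nat \<Rightarrow> ('z \<Rightarrow>\<^sub>L 'y)"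
  assumes p: "1 \<le> p" and p1: "p \<noteq> 1" and Slp: "S \<subseteq> {z. in_lp p z}"
    and rep: "formal_conv_rep S H \<kappa>"
    and smk: "summable (\<lambda>n. norm (\<kappa> n) powr holder_conj p)"
  shows "p_weighted_FMP p S H"
proof -
  define a where "a n = norm (\<kappa> n) powr holder_conj p" for n
  have a_nn: "0 \<le> a n" for n by (simp add: a_def)
  have sma: "summable a" using smk by (simp add: a_def[abs_def])
  obtain s where s_pos: "\<And>n. 0 < s n" and s_le1: "\<And>n. s n \<le> 1" and decs: "decseq s"
    and slim: "s \<longlonglongrightarrow> 0" and smA: "summable (\<lambda>n. a n / sqrt (s n))"
    using weights_exist[OF a_nn sma] by blast
  define A where "A = (\<Sum>n. a n / sqrt (s n))"
  have Ann: "0 \<le> a n / sqrt (s n)" for n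
    using a_nn[of n] s_pos[of n] by (intro divide_nonneg_pos) auto
  have A0: "0 \<le> A" unfolding A_def using Ann by (intro suminf_nonneg smA) auto
  have partA: "(\<Sum>n\<le>N. a n / sqrt (s n)) \<le> A" for N
    unfolding A_def using Ann by (intro sum_le_suminf smA) auto
  have udiff: "x \<in> S \<Longrightarrow> y \<in> S \<Longrightarrow> in_lp p (\<lambda>n. y n - x n)" for x y
    using lp_diff[OF p] Slp by auto
  show ?thesis
    using p
  proof (cases rule: p_cases)
    case 1
    have an: "a n = norm (\<kappa> n)" for n by (simp add: a_def 1 holder_conj_def)
    define w where "w n = sqrt (s n)" for n
    have w_pos: "0 < w n" for n using s_pos by (simp add: w_def)
    have ws: "weighting_seq w"
      unfolding weighting_seq_def
    proof (intro conjI allI)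
      show "0 < w n" for n by (rule w_pos)
      show "w n \<le> 1" for n using s_le1[of n] by (simp add: w_def)
      show "decseq w" using decs by (auto simp: decseq_def w_def)
      show "w \<longlonglongrightarrow> 0" using tendsto_real_sqrt[OF slim] by (simp add: w_def[abs_def])
    qed
    have "continuous_wrt (weighted_norm p w) S H"
      unfolding continuous_wrt_def
    proof (intro ballI allI impI)
      fix x e assume x: "x \<in> S" and e: "(0::real) < e"
      define d where "d = e / (A + 1)"
      have d: "0 < d" using e A0 by (simp add: d_def)
      show "\<exists>d>0. \<forall>y\<in>S. weighted_norm p w (\<lambda>n. y n - x n) < d \<longrightarrow> dist (H y) (H x) < e"
      proof (intro exI[of _ d] conjI d ballI impI)
        fix y assume y: "y \<in> S" and yd: "weighted_norm p w (\<lambda>n. y n - x n) < d"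
        define u where "u n = y n - x n" for n
        have uin: "in_lp p u" using udiff[OF x y] by (simp add: u_def[abs_def])
        define M where "M = (SUP n. w n * norm (u n))"
        have Md: "M < d" using yd 1 by (simp add: weighted_norm_def M_def u_def)
        have wle: "w n * norm (u n) \<le> lp_norm p u" for n
        proof -
          have "w n * norm (u n) \<le> 1 * norm (u n)"
            using ws by (intro mult_right_mono) (auto simp: weighting_seq_def)
          then show ?thesis using lp_norm_ge[OF p uin, of n] by simp
        qed
        have wM: "w n * norm (u n) \<le> M" for n
          unfolding M_def by (rule cSUP_upper) (use wle in \<open>auto simp: bdd_above_def\<close>)
        have M0: "0 \<le> M" using wM[of 0] w_pos[of 0] by (meson mult_nonneg_nonneg norm_ge_zero less_imp_le order_trans)
        have lu: "(\<lambda>N. \<Sum>n\<le>N. blinfun_apply (\<kappa> n) (u n)) \<longlonglongrightarrow> H y - H x"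
          unfolding u_def by (rule rep_diff[OF rep x y])
        have "norm (H y - H x) \<le> M * A"
        proof (rule lim_norm_bound[OF lu])
          fix N
          have "norm (\<Sum>n\<le>N. blinfun_apply (\<kappa> n) (u n)) \<le> (\<Sum>n\<le>N. norm (\<kappa> n) * norm (u n))"
            by (rule PS_norm_bound)
          also have "\<dots> \<le> (\<Sum>n\<le>N. M * (a n / sqrt (s n)))"
          proof (rule sum_mono)
            fix n
            have "norm (\<kappa> n) * norm (u n) = (a n / w n) * (w n * norm (u n))"
              using w_pos[of n] by (simp add: an)
            also have "\<dots> \<le> (a n / w n) * M"
              using wM[of n] a_nn[of n] w_pos[of n] by (intro mult_left_mono) auto
            finally show "norm (\<kappa> n) * norm (u n) \<le> M * (a n / sqrt (s n))"
              by (simp add: w_def mult.commute)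
          qed
          also have "\<dots> = M * (\<Sum>n\<le>N. a n / sqrt (s n))" by (simp add: sum_distrib_left)
          also have "\<dots> \<le> M * A" using M0 partA by (intro mult_left_mono) auto
          finally show "norm (\<Sum>n\<le>N. blinfun_apply (\<kappa> n) (u n)) \<le> M * A" .
        qed
        also have "\<dots> \<le> d * A" using Md A0 by (intro mult_right_mono) auto
        also have "\<dots> < e" using e A0 by (simp add: d_def field_simps)
        finally show "dist (H y) (H x) < e" by (simp add: dist_norm)
      qed
    qed
    then show ?thesis using ws Slp by (auto simp: p_weighted_FMP_def)
  next
    case (2 P)
    have P1: "1 < P" using 2 p1 by (auto simp: one_ereal_def)
    define q where "q = P / (P - 1)"
    have hq: "holder_conj p = q" using 2 by (simp add: holder_conj_def q_def)
    have q1: "1 < q" using P1 by (simp add: q_def field_simps)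
    have an: "a n = norm (\<kappa> n) powr q" for n by (simp add: a_def hq)
    have sq: "s n powr - (1/2) = 1 / sqrt (s n)" for n
      using s_pos[of n] by (simp add: powr_minus_divide powr_half_sqrt)
    define w where "w n = s n powr ((P-1)/2)" for n
    have w_pos: "0 < w n" for n using s_pos[of n] by (simp add: w_def)
    have w_le1: "w n \<le> 1" for n using s_le1[of n] s_pos[of n] P1 unfolding w_def
      by (intro powr_le1) auto
    have ws: "weighting_seq w"
      unfolding weighting_seq_def
    proof (intro conjI allI)
      show "0 < w n" for n by (rule w_pos)
      show "w n \<le> 1" for n by (rule w_le1)
      show "decseq w" unfolding decseq_def w_def
      proof (intro allI impI)
        fix m n :: nat assume "m \<le> n"
        hence "s n \<le> s m" using decs by (simp add: decseq_def)
        then show "s n powr ((P-1)/2) \<le> s m powr ((P-1)/2)"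
          using s_pos[of n] P1 by (intro powr_mono2) auto
      qed
      show "w \<longlonglongrightarrow> 0" unfolding w_def[abs_def]
        by (rule tendsto_zero_powrI[OF slim tendsto_const]) (use s_pos P1 in \<open>auto intro!: always_eventually less_imp_le\<close>)
    qed
    have "continuous_wrt (weighted_norm p w) S H"
      unfolding continuous_wrt_def
    proof (intro ballI allI impI)
      fix x e assume x: "x \<in> S" and e: "(0::real) < e"
      define L where "L = (e / (2 * (A + 1))) powr (1/q)"
      have L0: "0 < L" using e A0 by (simp add: L_def)
      have Lq: "L powr q = e / (2 * (A + 1))"
        using e A0 q1 by (simp add: L_def powr_powr)
      define d where "d = (L powr P * e / 2) powr (1/P)"
      have d: "0 < d" using e L0 by (simp add: d_def)
      have dP: "d powr P = L powr P * e / 2"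
        using e L0 P1 by (simp add: d_def powr_powr)
      show "\<exists>d>0. \<forall>y\<in>S. weighted_norm p w (\<lambda>n. y n - x n) < d \<longrightarrow> dist (H y) (H x) < e"
      proof (intro exI[of _ d] conjI d ballI impI)
        fix y assume y: "y \<in> S" and yd: "weighted_norm p w (\<lambda>n. y n - x n) < d"
        define u where "u n = y n - x n" for n
        have uin: "in_lp p u" using udiff[OF x y] by (simp add: u_def[abs_def])
        have smu: "summable (\<lambda>n. norm (u n) powr P)" using uin 2 by (simp add: in_lp_def)
        have smW: "summable (\<lambda>n. w n * norm (u n) powr P)"
        proof (rule summable_comparison_test[rotated, OF smu], intro exI[of _ 0] allI impI)
          fix n
          have "w n * norm (u n) powr P \<le> 1 * norm (u n) powr P"
            using w_le1[of n] by (intro mult_right_mono) auto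
          then show "norm (w n * norm (u n) powr P) \<le> norm (u n) powr P"
            using w_pos[of n] by simp
        qed
        define W where "W = (\<Sum>n. w n * norm (u n) powr P)"
        have Wnn: "0 \<le> w n * norm (u n) powr P" for n
          using w_pos[of n] by (intro mult_nonneg_nonneg) auto
        have W0: "0 \<le> W" unfolding W_def using Wnn
          by (intro suminf_nonneg smW) auto
        have "W powr (1/P) < d" using yd 2 by (simp add: weighted_norm_def W_def u_def)
        hence "(W powr (1/P)) powr P < d powr P" using W0 P1 by (intro powr_less_mono2) auto
        hence WL: "W < L powr P * e / 2" using W0 P1 dP by (simp add: powr_powr)
        have lu: "(\<lambda>N. \<Sum>n\<le>N. blinfun_apply (\<kappa> n) (u n)) \<longlonglongrightarrow> H y - H x"
          unfolding u_def by (rule rep_diff[OF rep x y])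
        have "norm (H y - H x) \<le> L powr q * A + L powr (-P) * W"
        proof (rule lim_norm_bound[OF lu])
          fix N
          have "norm (\<Sum>n\<le>N. blinfun_apply (\<kappa> n) (u n)) \<le> (\<Sum>n\<le>N. norm (\<kappa> n) * norm (u n))"
            by (rule PS_norm_bound)
          also have "\<dots> \<le> (\<Sum>n\<le>N. L powr q * (a n / sqrt (s n)) + L powr (-P) * (w n * norm (u n) powr P))"
          proof (rule sum_mono)
            fix n
            show "norm (\<kappa> n) * norm (u n) \<le> L powr q * (a n / sqrt (s n)) + L powr (-P) * (w n * norm (u n) powr P)"
              using young_split[OF P1 q_def L0 norm_ge_zero s_pos[of n] norm_ge_zero, of "\<kappa> n" "u n"]
              by (simp add: sq an w_def)
          qed
          also have "\<dots> = L powr q * (\<Sum>n\<le>N. a n / sqrt (s n)) + L powr (-P) * (\<Sum>n\<le>N. w n * norm (u n) powr P)"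
            by (simp add: sum.distrib sum_distrib_left)
          also have "\<dots> \<le> L powr q * A + L powr (-P) * W"
          proof (intro add_mono mult_left_mono partA)
            show "(\<Sum>n\<le>N. w n * norm (u n) powr P) \<le> W"
              unfolding W_def using Wnn by (intro sum_le_suminf smW) auto
          qed auto
          finally show "norm (\<Sum>n\<le>N. blinfun_apply (\<kappa> n) (u n)) \<le> L powr q * A + L powr (-P) * W" .
        qed
        also have "L powr q * A < e / 2"
        proof -
          have "L powr q * A = e * A / (2 * (A + 1))" using Lq by simp
          also have "\<dots> < e / 2" using e A0 by (simp add: field_simps)
          finally show ?thesis .
        qed
        also have "L powr (-P) * W < e / 2"
        proof -
          have LP: "0 < L powr P" using L0 by simp
          have "L powr (-P) * W = W / L powr P" by (simp add: powr_minus_divide)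
          also have "\<dots> < e / 2" using WL LP by (simp add: divide_less_eq field_simps)
          finally show ?thesis .
        qed
        finally show "dist (H y) (H x) < e" by (simp add: dist_norm)
      qed
    qed
    then show ?thesis using ws Slp by (auto simp: p_weighted_FMP_def)
  qed
qed

theorem lemma3p1:
  fixes p :: ereal
    and S :: "(nat \<Rightarrow> 'z::real_normed_vector) set"
    and H :: "(nat \<Rightarrow> 'z) \<Rightarrow> 'y::real_normed_vector"
    and \<kappa> :: "nat \<Rightarrow> ('z \<Rightarrow>\<^sub>L 'y)"
  assumes p: "1 \<le> p"
    and adm: "admissible_inputs S"
    and dom: "(lp_ball p \<subseteq> S \<and> S \<subseteq> {z. in_lp p z}) \<or>
              (c0_seq \<inter> lp_ball p \<subseteq> S \<and> S \<subseteq> c0_seq \<inter> {z. in_lp p z})"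
    and lin: "linear_functional S H"
    and rep: "formal_conv_rep S H \<kappa>"
  shows "p_continuous p S H \<and>
         (p \<noteq> 1 \<and> summable (\<lambda>n. norm (\<kappa> n) powr holder_conj p) \<longrightarrow> p_weighted_FMP p S H)"
proof -
  have ballS: "c0_seq \<inter> lp_ball p \<subseteq> S" and Slp: "S \<subseteq> {z. in_lp p z}"
    and alt: "lp_ball p \<subseteq> S \<or> S \<subseteq> c0_seq"
    using dom by auto
  have "p_continuous p S H" by (rule part_i[OF p ballS Slp alt rep])
  moreover have "p \<noteq> 1 \<and> summable (\<lambda>n. norm (\<kappa> n) powr holder_conj p) \<longrightarrow> p_weighted_FMP p S H"
    using part_ii[OF p _ Slp rep] by blast
  ultimately show ?thesis by blast
qed

end
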